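(* Let $S\subseteq\mathbb{M}^\Sigma$ be a masked semilinear set. Then there exists a deterministic automaton $\mathcal{A}$ over $\Sigma$ such that $\Psi(\mathfrak{J}(\mathcal{A}))=S$.
   Context: An automaton is $\mathcal{A}=\langle\Sigma,Q,\delta,Q_0,\alpha\rangle$ with B\"uchi acceptance (a run is accepting if it visits $\alpha$ infinitely often); it is deterministic if $|Q_0|=1$ and $|\delta(q,\sigma)|=1$ for all $q,\sigma$. For $w\in\Sigma^\omega$, $\Psi(w)\in\mathbb{N}_\infty^\Sigma$ gives for each letter its number of occurrences (or $\infty$); $w\sim w'$ iff $\Psi(w)=\Psi(w')$; $\mathfrak{J}(\mathcal{A})=\{w\in\Sigma^\omega:\exists w'\sim w,\ w'\in\mathfrak{L}(\mathcal{A})\}$. $\mathbb{M}^\Sigma=\mathbb{N}_\infty^\Sigma\setminus\mathbb{N}^\Sigma$. A mask is $\mathfrak{m}\in\{0,\infty\}^\Sigma\setminus\{\vec 0\}$; $\vec x\oplus\mathfrak{m}$ has coordinate $\vec x(\sigma)$ where $\mathfrak{m}(\sigma)=0$ and $\infty$ elsewhere. A masked semilinear set is $\bigcup_{\mathfrak{m}}\{\vec x\oplus\mathfrak{m}:\vec x\in S_\mathfrak{m}\}$ over all masks, with each $S_\mathfrak{m}\subseteq\mathbb{N}^\Sigma$ semilinear (possibly empty). *)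

theory Defs
  imports Main "HOL-Library.Extended_Nat"
begin

record 'a nba =
  states :: "nat set"
  trans  :: "nat \<Rightarrow> 'a \<Rightarrow> nat set"
  init   :: "nat set"
  accept :: "nat set"

definition wf_nba :: "'a nba \<Rightarrow> bool" where
  "wf_nba A \<longleftrightarrow> finite (states A) \<and> init A \<subseteq> states A \<and> accept A \<subseteq> states A
     \<and> (\<forall>q\<in>states A. \<forall>s. trans A q s \<subseteq> states A)"

definition deterministic :: "'a nba \<Rightarrow> bool" where
  "deterministic A \<longleftrightarrow> card (init A) = 1 \<and> (\<forall>q\<in>states A. \<forall>s. card (trans A q s) = 1)"

definition is_run :: "'a nba \<Rightarrow> (nat \<Rightarrow> 'a) \<Rightarrow> (nat \<Rightarrow> nat) \<Rightarrow> bool" where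
  "is_run A w r \<longleftrightarrow> r 0 \<in> init A \<and> (\<forall>i. r (Suc i) \<in> trans A (r i) (w i))"

definition accepting_run :: "'a nba \<Rightarrow> (nat \<Rightarrow> nat) \<Rightarrow> bool" where
  "accepting_run A r \<longleftrightarrow> (\<exists>\<^sub>\<infinity> i. r i \<in> accept A)"

definition lang :: "'a nba \<Rightarrow> (nat \<Rightarrow> 'a) set" where
  "lang A = {w. \<exists>r. is_run A w r \<and> accepting_run A r}"

definition parikh :: "(nat \<Rightarrow> 'a) \<Rightarrow> 'a \<Rightarrow> enat" where
  "parikh w s = (if finite {i. w i = s} then enat (card {i. w i = s}) else \<infinity>)"

definition Jclos :: "'a nba \<Rightarrow> (nat \<Rightarrow> 'a) set" where
  "Jclos A = {w. \<exists>w'. parikh w' = parikh w \<and> w' \<in> lang A}"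

definition linear_set :: "('a \<Rightarrow> nat) set \<Rightarrow> bool" where
  "linear_set L \<longleftrightarrow> (\<exists>b (P :: ('a \<Rightarrow> nat) list).
      L = {x. \<exists>c :: nat \<Rightarrow> nat. x = (\<lambda>s. b s + (\<Sum>i<length P. c i * (P ! i) s))})"

definition semilinear :: "('a \<Rightarrow> nat) set \<Rightarrow> bool" where
  "semilinear S \<longleftrightarrow> (\<exists>F. finite F \<and> (\<forall>L\<in>F. linear_set L) \<and> S = \<Union>F)"

definition is_mask :: "('a \<Rightarrow> enat) \<Rightarrow> bool" where
  "is_mask m \<longleftrightarrow> (\<forall>s. m s = 0 \<or> m s = \<infinity>) \<and> m \<noteq> (\<lambda>_. 0)"

definition mask_add :: "('a \<Rightarrow> nat) \<Rightarrow> ('a \<Rightarrow> enat) \<Rightarrow> ('a \<Rightarrow> enat)" where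
  "mask_add x m = (\<lambda>s. if m s = 0 then enat (x s) else \<infinity>)"

definition masked_semilinear :: "('a \<Rightarrow> enat) set \<Rightarrow> bool" where
  "masked_semilinear S \<longleftrightarrow> (\<exists>Sm :: ('a \<Rightarrow> enat) \<Rightarrow> ('a \<Rightarrow> nat) set.
      (\<forall>m. is_mask m \<longrightarrow> semilinear (Sm m)) \<and>
      S = (\<Union>m\<in>{m. is_mask m}. (\<lambda>x. mask_add x m) ` Sm m))"

end

theory Submission
  imports Defs "HOL-Library.FuncSet"
begin


primrec drun :: "('s \<Rightarrow> 'a \<Rightarrow> 's) \<Rightarrow> 's \<Rightarrow> (nat \<Rightarrow> 'a) \<Rightarrow> nat \<Rightarrow> 's" where
  "drun d q0 w 0 = q0"
| "drun d q0 w (Suc i) = d (drun d q0 w i) (w i)"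

definition dlang :: "('s \<Rightarrow> 'a \<Rightarrow> 's) \<Rightarrow> 's \<Rightarrow> 's set \<Rightarrow> (nat \<Rightarrow> 'a) set" where
  "dlang d q0 Acc = {w. \<exists>\<^sub>\<infinity> i. drun d q0 w i \<in> Acc}"

definition dba_ok :: "'s set \<Rightarrow> ('s \<Rightarrow> 'a \<Rightarrow> 's) \<Rightarrow> 's \<Rightarrow> bool" where
  "dba_ok Q d q0 \<longleftrightarrow> finite Q \<and> q0 \<in> Q \<and> (\<forall>q\<in>Q. \<forall>s. d q s \<in> Q)"

lemma drun_in: "dba_ok Q d q0 \<Longrightarrow> drun d q0 w i \<in> Q"
  by (induct i) (auto simp: dba_ok_def)

lemma dba_to_nba:
  assumes ok: "dba_ok Q d q0"
  shows "\<exists>A :: 'a nba. wf_nba A \<and> deterministic A \<and> lang A = dlang d q0 Acc"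
proof -
  have fin: "finite Q" using ok by (simp add: dba_ok_def)
  obtain f where f: "bij_betw f Q {0..<card Q}" using ex_bij_betw_finite_nat[OF fin] by blast
  have inj: "inj_on f Q" using f by (simp add: bij_betw_def)
  define g where "g = inv_into Q f"
  have gf: "q \<in> Q \<Longrightarrow> g (f q) = q" for q using inj by (simp add: g_def)
  define A :: "'a nba" where "A = \<lparr>states = f ` Q, trans = (\<lambda>n s. {f (d (g n) s)}),
       init = {f q0}, accept = f ` (Acc \<inter> Q)\<rparr>"
  have wf: "wf_nba A" using ok gf by (auto simp: A_def wf_nba_def dba_ok_def)
  have det: "deterministic A" by (simp add: A_def deterministic_def)
  have run: "is_run A w r \<longleftrightarrow> r = (\<lambda>i. f (drun d q0 w i))" for w r
  proof
    assume r: "is_run A w r"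
    have "r i = f (drun d q0 w i)" for i
    proof (induct i)
      case 0 then show ?case using r by (simp add: is_run_def A_def)
    next
      case (Suc i)
      have "r (Suc i) \<in> trans A (r i) (w i)" using r by (simp add: is_run_def)
      then show ?case using Suc gf[OF drun_in[OF ok]] by (simp add: A_def)
    qed
    then show "r = (\<lambda>i. f (drun d q0 w i))" by auto
  next
    assume "r = (\<lambda>i. f (drun d q0 w i))"
    then show "is_run A w r" using gf[OF drun_in[OF ok]] by (simp add: is_run_def A_def)
  qed
  have acc: "f (drun d q0 w i) \<in> accept A \<longleftrightarrow> drun d q0 w i \<in> Acc" for w i
    using drun_in[OF ok] inj by (auto simp: A_def inj_on_def)
  have "lang A = dlang d q0 Acc"
    by (simp add: lang_def dlang_def run accepting_run_def acc)
  then show ?thesis using wf det by blast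
qed

lemma nba_to_dba:
  assumes wf: "wf_nba A" and det: "deterministic A"
  shows "dba_ok (states A) (\<lambda>q s. the_elem (trans A q s)) (the_elem (init A))
     \<and> lang A = dlang (\<lambda>q s. the_elem (trans A q s)) (the_elem (init A)) (accept A)"
proof -
  obtain q0 where q0: "init A = {q0}" using det by (auto simp: deterministic_def card_1_singleton_iff)
  have tr: "q \<in> states A \<Longrightarrow> trans A q s = {the_elem (trans A q s)}" for q s
  proof -
    assume "q \<in> states A"
    then have "card (trans A q s) = Suc 0" using det unfolding deterministic_def by simp
    then obtain x where "trans A q s = {x}" unfolding card_1_singleton_iff by blast
    then show ?thesis by simp
  qed
  have ok: "dba_ok (states A) (\<lambda>q s. the_elem (trans A q s)) (the_elem (init A))"
    unfolding dba_ok_def using wf q0 tr by (auto simp: wf_nba_def) (metis insert_subset)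
  let ?d = "\<lambda>q s. the_elem (trans A q s)"
  have run: "is_run A w r \<longleftrightarrow> r = drun ?d q0 w" for w r
  proof
    assume r: "is_run A w r"
    have "r i = drun ?d q0 w i" for i
    proof (induct i)
      case 0 then show ?case using r q0 by (simp add: is_run_def)
    next
      case (Suc i)
      have "r (Suc i) \<in> trans A (r i) (w i)" using r by (simp add: is_run_def)
      then show ?case using Suc tr[of "drun ?d q0 w i" "w i"] drun_in[OF ok, of w i] q0
        by auto
    qed
    then show "r = drun ?d q0 w" by auto
  next
    assume "r = drun ?d q0 w"
    then show "is_run A w r" using tr drun_in[OF ok] q0 
      by (auto simp: is_run_def)
  qed
  show ?thesis using ok q0 by (simp add: lang_def dlang_def run accepting_run_def)
qed

lemma dba_prod:
  assumes "dba_ok Q1 d1 q1" "dba_ok Q2 d2 q2"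
  shows "dba_ok (Q1 \<times> Q2) (\<lambda>(p,q) s. (d1 p s, d2 q s)) (q1,q2)"
   and "dlang (\<lambda>(p,q) s. (d1 p s, d2 q s)) (q1,q2) (Acc1 \<times> UNIV \<union> UNIV \<times> Acc2)
        = dlang d1 q1 Acc1 \<union> dlang d2 q2 Acc2"
proof -
  show "dba_ok (Q1 \<times> Q2) (\<lambda>(p,q) s. (d1 p s, d2 q s)) (q1,q2)"
    using assms by (auto simp: dba_ok_def)
  have r: "drun (\<lambda>(p,q) s. (d1 p s, d2 q s)) (q1,q2) w i = (drun d1 q1 w i, drun d2 q2 w i)" for w i
    by (induct i) auto
  show "dlang (\<lambda>(p,q) s. (d1 p s, d2 q s)) (q1,q2) (Acc1 \<times> UNIV \<union> UNIV \<times> Acc2)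
        = dlang d1 q1 Acc1 \<union> dlang d2 q2 Acc2"
    by (simp add: dlang_def r frequently_disj_iff Collect_disj_eq)
qed

definition Good :: "('a \<Rightarrow> enat) set \<Rightarrow> bool" where
  "Good X \<longleftrightarrow> (\<exists>A :: 'a nba. wf_nba A \<and> deterministic A \<and> parikh ` lang A = X)"

lemma Good_empty: "Good {}"
proof -
  have ok: "dba_ok {0::nat} (\<lambda>_ _. 0) 0" by (simp add: dba_ok_def)
  obtain A :: "'a nba" where "wf_nba A" "deterministic A" "lang A = dlang (\<lambda>_ _. 0::nat) 0 {}"
    using dba_to_nba[OF ok] by blast
  then show ?thesis unfolding Good_def by (intro exI[of _ A]) (simp add: dlang_def)
qed

lemma Good_Un: assumes "Good X" "Good Y" shows "Good (X \<union> Y)"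
proof -
  obtain A1 :: "'a nba" where A1: "wf_nba A1" "deterministic A1" "parikh ` lang A1 = X"
    using assms(1) by (auto simp: Good_def)
  obtain A2 :: "'a nba" where A2: "wf_nba A2" "deterministic A2" "parikh ` lang A2 = Y"
    using assms(2) by (auto simp: Good_def)
  note D1 = nba_to_dba[OF A1(1,2)] and D2 = nba_to_dba[OF A2(1,2)]
  note P = dba_prod[OF D1[THEN conjunct1] D2[THEN conjunct1]]
  obtain A :: "'a nba" where "wf_nba A" "deterministic A"
     "lang A = dlang (\<lambda>(p,q) s. (the_elem (trans A1 p s), the_elem (trans A2 q s)))
        (the_elem (init A1), the_elem (init A2)) (accept A1 \<times> UNIV \<union> UNIV \<times> accept A2)"
    using dba_to_nba[OF P(1)] by blast
  then show ?thesis unfolding Good_def using A1 A2 D1 D2 P(2)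
    by (intro exI[of _ A]) (auto simp: image_Un)
qed

lemma Good_Union: "finite F \<Longrightarrow> (\<forall>X\<in>F. Good X) \<Longrightarrow> Good (\<Union>F)"
  by (induct F rule: finite_induct) (auto intro: Good_empty Good_Un)

lemma parikh_Jclos: "parikh ` Jclos A = parikh ` lang A"
  unfolding Jclos_def by (auto simp: image_def) metis+



datatype 'v st = Cnt bool 'v | Tail nat | Sink

lemma if_in2: "(c \<Longrightarrow> x \<in> A) \<Longrightarrow> (\<not>c \<Longrightarrow> y \<in> A) \<Longrightarrow> (if c then x else y) \<in> A"
  by simp

locale piece =
  fixes m :: "'a::finite \<Rightarrow> enat" and b :: "'a \<Rightarrow> nat" and P :: "('a \<Rightarrow> nat) list"
  assumes mask: "is_mask m"
begin

definition "F = {s. m s = 0}"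
definition "I = {s. m s \<noteq> 0}"
definition "e = (SOME s. s \<in> I)"
definition "cyc = (SOME xs. set xs = I)"
definition "len = length cyc"
definition "N = Max (range b \<union> (\<Union>i\<in>{..<length P}. range (P!i)))"
definition "rF v = (\<lambda>s. if s \<in> F then v s else 0)"
definition "L = {x. \<exists>c :: nat \<Rightarrow> nat. x = (\<lambda>s. b s + (\<Sum>i<length P. c i * (P ! i) s))}"

lemma I_ne: "I \<noteq> {}"
proof
  assume "I = {}"
  then have "m = (\<lambda>_. 0)" by (auto simp: I_def)
  then show False using mask by (simp add: is_mask_def)
qed

lemma e_I: "e \<in> I" using I_ne unfolding e_def by (metis ex_in_conv someI)
lemma F_I: "s \<in> F \<longleftrightarrow> s \<notin> I" by (simp add: F_def I_def)
lemma e_F: "e \<notin> F" using e_I F_I by blast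
lemma set_cyc: "set cyc = I"
  unfolding cyc_def by (rule someI_ex) (simp add: finite_list)
lemma len_pos: "len > 0" using set_cyc I_ne by (auto simp: len_def)
lemma b_le: "b s \<le> N"
  unfolding N_def by (rule Max_ge) auto
lemma P_le: "i < length P \<Longrightarrow> (P!i) s \<le> N"
  unfolding N_def by (rule Max_ge) auto

lemma b_L: "b \<in> L"
  unfolding L_def by (intro CollectI exI[of _ "\<lambda>_. 0"]) simp

lemma L_add: assumes "x \<in> L" "i < length P" shows "(\<lambda>s. x s + (P!i) s) \<in> L"
proof -
  obtain c where c: "x = (\<lambda>s. b s + (\<Sum>j<length P. c j * (P ! j) s))" using assms(1) by (auto simp: L_def)
  define c' where "c' = c(i := Suc (c i))"
  have "(\<Sum>j<length P. c' j * (P ! j) s) = (\<Sum>j<length P. c j * (P ! j) s + (if j = i then (P!i) s else 0))" for s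
    by (rule sum.cong) (auto simp: c'_def)
  also have "\<dots>s = (\<Sum>j<length P. c j * (P ! j) s) + (P!i) s" for s
    using assms(2) by (simp add: sum.distrib)
  finally show ?thesis unfolding L_def c by (intro CollectI exI[of _ c']) auto
qed

definition delta :: "('a \<Rightarrow> nat) st \<Rightarrow> 'a \<Rightarrow> ('a \<Rightarrow> nat) st" where
  "delta q s = (case q of
     Cnt f v \<Rightarrow> (if s \<in> F then (if v s < N then Cnt f (v(s := Suc (v s))) else Sink)
               else if s = e then
                 (if f then (if v = rF b then Cnt False (\<lambda>_. 0) else Sink)
                  else if v = (\<lambda>_. 0) then Tail 0
                  else if v \<in> rF ` set P then Cnt False (\<lambda>_. 0) else Sink)
               else Sink)
   | Tail k \<Rightarrow> (if s = cyc ! k then Tail (Suc k mod len) else Sink)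
   | Sink \<Rightarrow> Sink)"

lemma delta_Cnt: "delta (Cnt f v) s = (if s \<in> F then (if v s < N then Cnt f (v(s := Suc (v s))) else Sink)
               else if s = e then
                 (if f then (if v = rF b then Cnt False (\<lambda>_. 0) else Sink)
                  else if v = (\<lambda>_. 0) then Tail 0
                  else if v \<in> rF ` set P then Cnt False (\<lambda>_. 0) else Sink)
               else Sink)"
  by (simp add: delta_def)

lemma delta_Tail: "delta (Tail k) s = (if s = cyc ! k then Tail (Suc k mod len) else Sink)"
  by (simp add: delta_def)

lemma delta_Sink: "delta Sink s = Sink"
  by (simp add: delta_def)

definition "q0 = Cnt True (\<lambda>_. 0)"
definition "B = {v::'a\<Rightarrow>nat. \<forall>s. v s \<le> N}"
definition "Q = Cnt True ` B \<union> Cnt False ` B \<union> Tail ` {..<len} \<union> {Sink}"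

lemma finite_B: "finite B"
proof -
  have "B \<subseteq> Pi\<^sub>E UNIV (\<lambda>_. {..N})" by (auto simp: B_def PiE_iff)
  then show ?thesis by (rule finite_subset) (rule finite_PiE, auto)
qed

lemma ok: "dba_ok Q delta q0"
  unfolding dba_ok_def
proof (intro conjI ballI allI)
  show "finite Q" using finite_B by (simp add: Q_def)
  show "q0 \<in> Q" by (simp add: Q_def q0_def B_def)
  fix q s assume q: "q \<in> Q"
  have m1: "Sink \<in> Q" "\<And>f v. v \<in> B \<Longrightarrow> Cnt f v \<in> Q" "\<And>k. k < len \<Longrightarrow> Tail k \<in> Q"
    by (auto simp: Q_def)
  have m2: "Cnt f (\<lambda>_. 0) \<in> Q" for f by (rule m1(2)) (simp add: B_def)
  show "delta q s \<in> Q"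
  proof (cases q)
    case (Cnt f v)
    then have "v \<in> B" using q by (auto simp: Q_def)
    then have "v s < N \<Longrightarrow> v(s := Suc (v s)) \<in> B" by (auto simp: B_def)
    moreover have "Tail 0 \<in> Q" using m1(3) len_pos by blast
    ultimately show ?thesis using Cnt m1 m2 \<open>v \<in> B\<close> e_F
      unfolding Cnt delta_Cnt by (intro if_in2; simp)
  next
    case (Tail k)
    then show ?thesis using m1 len_pos by (simp add: delta_def)
  next
    case Sink
    then show ?thesis using m1 by (simp add: delta_def)
  qed
qed


definition invst :: "('a \<Rightarrow> nat) st \<Rightarrow> ('a \<Rightarrow> nat) \<Rightarrow> bool" where
  "invst q c = (case q of
      Cnt f v \<Rightarrow> (f \<longrightarrow> (\<forall>s. v s = rF c s)) \<and> (\<not>f \<longrightarrow> (\<exists>x\<in>L. \<forall>s. rF c s = rF x s + v s))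
    | Tail k \<Rightarrow> k = 0 \<and> (\<exists>x\<in>L. \<forall>s. rF c s = rF x s)
    | Sink \<Rightarrow> True)"

lemma step_inv:
  assumes inv: "invst (Cnt f v) c" and ns: "delta (Cnt f v) t \<noteq> Sink"
  shows "invst (delta (Cnt f v) t) (c(t := Suc (c t)))"
proof (cases "t \<in> F")
  case True
  with ns have lt: "v t < N" by (auto simp: delta_Cnt split: if_splits)
  have d: "delta (Cnt f v) t = Cnt f (v(t := Suc (v t)))" using True lt by (simp add: delta_Cnt)
  have rc: "rF (c(t := Suc (c t))) s = rF c s + (if s = t then 1 else 0)" for s
    using True by (simp add: rF_def)
  show ?thesis
  proof (cases f)
    case True
    then show ?thesis using inv unfolding d invst_def by (simp add: rc)
  next
    case False
    then obtain x where "x \<in> L" "\<forall>s. rF c s = rF x s + v s" using inv by (auto simp: invst_def)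
    then show ?thesis using False unfolding d invst_def by (auto simp: rc intro!: bexI[of _ x])
  qed
next
  case False
  have rc: "rF (c(t := Suc (c t))) = rF c" using False by (auto simp: rF_def)
  have te: "t = e" using ns False by (auto simp: delta_Cnt split: if_splits)
  show ?thesis
  proof (cases f)
    case True
    then have "v = rF b" using ns False te by (auto simp: delta_Cnt split: if_splits)
    then have "delta (Cnt f v) t = Cnt False (\<lambda>_. 0)" using True False te by (simp add: delta_Cnt)
    then show ?thesis using inv True unfolding invst_def rc
      by (auto intro!: bexI[of _ b] b_L simp: \<open>v = rF b\<close>)
  next
    case f: False
    then obtain x where x: "x \<in> L" "\<forall>s. rF c s = rF x s + v s" using inv by (auto simp: invst_def)
    show ?thesis
    proof (cases "v = (\<lambda>_. 0)")
      case True
      then have "delta (Cnt f v) t = Tail 0" using f False te by (simp add: delta_Cnt)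
      then show ?thesis using x True unfolding invst_def rc by auto
    next
      case nz: False
      then have "v \<in> rF ` set P" using ns False te f by (auto simp: delta_Cnt split: if_splits)
      then obtain i where i: "i < length P" "v = rF (P!i)" by (auto simp: in_set_conv_nth)
      have d: "delta (Cnt f v) t = Cnt False (\<lambda>_. 0)" using f False te nz \<open>v \<in> rF ` set P\<close>
        by (simp add: delta_Cnt)
      have "(\<lambda>s. x s + (P!i) s) \<in> L" using L_add[OF x(1) i(1)] .
      moreover have "\<forall>s. rF c s = rF (\<lambda>s. x s + (P!i) s) s" using x(2) i(2) by (auto simp: rF_def)
      ultimately show ?thesis unfolding d invst_def rc using f by auto
    qed
  qed
qed

lemma tail_parikh:
  assumes tw: "\<forall>j. w (n0 + j) = cyc ! (j mod len)"
  shows "s \<in> I \<Longrightarrow> infinite {i. w i = s}"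
    and "s \<in> F \<Longrightarrow> {i. w i = s} = {i. i < n0 \<and> w i = s}"
proof -
  assume "s \<in> I"
  then have "s \<in> set cyc" using set_cyc by simp
  then obtain k where k: "k < len" "cyc ! k = s" unfolding len_def in_set_conv_nth by blast
  define g where "g j = n0 + k + j * len" for j
  have "inj g" using len_pos by (auto simp: inj_def g_def)
  then have "infinite (range g)" by (rule range_inj_infinite)
  moreover have "range g \<subseteq> {i. w i = s}"
  proof
    fix i assume "i \<in> range g"
    then obtain j where "i = g j" by blast
    then have "i = n0 + (k + j * len)" by (simp add: g_def)
    then show "i \<in> {i. w i = s}" using tw k by simp
  qed
  ultimately show "infinite {i. w i = s}" by (rule infinite_super[rotated])
next
  assume s: "s \<in> F"
  have "w i \<noteq> s" if "\<not> i < n0" for i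
  proof -
    have "w i = cyc ! ((i - n0) mod len)" using tw[rule_format, of "i - n0"] that by simp
    moreover have "(i - n0) mod len < length cyc" using len_pos by (simp add: len_def)
    ultimately have "w i \<in> set cyc" by simp
    then have "w i \<in> I" using set_cyc by simp
    then show ?thesis using s F_I by auto
  qed
  then show "{i. w i = s} = {i. i < n0 \<and> w i = s}" by auto
qed

lemma sound:
  assumes wl: "w \<in> dlang delta q0 {Tail 0}"
  shows "parikh w \<in> (\<lambda>x. mask_add x m) ` L"
proof -
  define r where "r = drun delta q0 w"
  define cnt where "cnt n s = card {i. i < n \<and> w i = s}" for n s
  have inf: "\<exists>\<^sub>\<infinity> i. r i = Tail 0" using wl by (simp add: dlang_def r_def)
  have sink: "r (i + k) = Sink" if "r i = Sink" for i k
    using that by (induct k) (auto simp: r_def delta_Sink)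
  have nosink: "r i \<noteq> Sink" for i
  proof
    assume "r i = Sink"
    obtain j where "j \<ge> i" "r j = Tail 0" using inf unfolding INFM_nat_le by blast
    then show False using sink[OF \<open>r i = Sink\<close>, of "j - i"] by simp
  qed
  have cnt_Suc: "cnt (Suc n) = (cnt n)(w n := Suc (cnt n (w n)))" for n
  proof
    fix s
    have "{i. i < Suc n \<and> w i = s} = {i. i < n \<and> w i = s} \<union> (if w n = s then {n} else {})"
      by (auto simp: less_Suc_eq)
    then show "cnt (Suc n) s = ((cnt n)(w n := Suc (cnt n (w n)))) s"
      by (auto simp: cnt_def)
  qed
  have ex: "\<exists>n k. r n = Tail k" using inf unfolding INFM_nat_le by blast
  define n0 where "n0 = (LEAST n. \<exists>k. r n = Tail k)"
  have n0: "\<exists>k. r n0 = Tail k" unfolding n0_def using ex by (rule LeastI_ex)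
  have before: "\<not> (\<exists>k. r n = Tail k)" if "n < n0" for n
    using not_less_Least[OF that[unfolded n0_def]] .
  have INV: "n \<le> n0 \<Longrightarrow> invst (r n) (cnt n)" for n
  proof (induct n)
    case 0
    then show ?case by (simp add: r_def q0_def invst_def cnt_def rF_def)
  next
    case (Suc n)
    then have "n < n0" by simp
    then obtain f v where rn: "r n = Cnt f v" using before[of n] nosink[of n] by (cases "r n") auto
    have rs: "r (Suc n) = delta (Cnt f v) (w n)" using rn by (simp add: r_def)
    show ?case unfolding rs cnt_Suc
      by (rule step_inv) (use Suc rn rs nosink[of "Suc n"] in auto)
  qed
  obtain k where k: "r n0 = Tail k" using n0 by blast
  with INV[of n0] obtain x where x: "x \<in> L" "\<forall>s. rF (cnt n0) s = rF x s" and k0: "k = 0"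
    by (auto simp: invst_def)
  have rt: "r (n0 + j) = Tail (j mod len)" for j
  proof (induct j)
    case 0 then show ?case using k k0 by simp
  next
    case (Suc j)
    have "r (n0 + Suc j) = delta (Tail (j mod len)) (w (n0 + j))" using Suc by (simp add: r_def)
    moreover have "r (n0 + Suc j) \<noteq> Sink" by (rule nosink)
    ultimately show ?case by (auto simp: delta_Tail mod_Suc_eq split: if_splits)
  qed
  have tw: "\<forall>j. w (n0 + j) = cyc ! (j mod len)"
  proof
    fix j
    have "r (n0 + Suc j) = delta (Tail (j mod len)) (w (n0 + j))" using rt[of j] by (simp add: r_def)
    moreover have "r (n0 + Suc j) \<noteq> Sink" by (rule nosink)
    ultimately show "w (n0 + j) = cyc ! (j mod len)" by (auto simp: delta_Tail split: if_splits)
  qed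
  have "parikh w = mask_add x m"
  proof
    fix s
    show "parikh w s = mask_add x m s"
    proof (cases "s \<in> F")
      case True
      then have eq: "{i. w i = s} = {i. i < n0 \<and> w i = s}" by (rule tail_parikh(2)[OF tw])
      have "card {i. i < n0 \<and> w i = s} = x s" using x(2)[rule_format, of s] True
        by (simp add: rF_def cnt_def)
      then show ?thesis using True eq by (simp add: parikh_def mask_add_def F_def)
    next
      case False
      then have "infinite {i. w i = s}" using F_I tail_parikh(1)[OF tw] by blast
      then show ?thesis using False by (simp add: parikh_def mask_add_def F_def)
    qed
  qed
  then show ?thesis using x(1) by blast
qed


definition "enumF = (SOME xs. set xs = F \<and> distinct xs)"
lemma enumF: "set enumF = F" "distinct enumF"
proof -
  have "\<exists>xs. set xs = F \<and> distinct xs" by (rule finite_distinct_list) simp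
  then have "set enumF = F \<and> distinct enumF" unfolding enumF_def by (rule someI_ex)
  then show "set enumF = F" "distinct enumF" by auto
qed

definition "wordof v = concat (map (\<lambda>t. replicate (v t) t) enumF)"

lemma set_wordof: "set (wordof v) \<subseteq> F"
proof
  fix t assume "t \<in> set (wordof v)"
  then have "t \<in> set enumF" by (auto simp: wordof_def split: if_splits)
  then show "t \<in> F" using enumF(1) by simp
qed

lemma count_rep: "count_list (replicate n t) s = (if t = s then n else 0)"
  by (induct n) auto

lemma count_rep_list: "count_list (concat (replicate k xs)) s = k * count_list xs s"
  by (induct k) auto

lemma count_wordof: "count_list (wordof v) s = rF v s"
proof -
  have "count_list (wordof v) s = sum_list (map (\<lambda>t. if t = s then v t else 0) enumF)"
    by (simp add: wordof_def count_list_concat comp_def count_rep)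
  also have "\<dots> = (\<Sum>t\<in>F. if t = s then v t else 0)"
    using enumF by (simp add: sum_list_distinct_conv_sum_set)
  also have "\<dots> = rF v s" by (simp add: rF_def)
  finally show ?thesis .
qed

lemma read_list:
  "set xs \<subseteq> F \<Longrightarrow> \<forall>s. u s + count_list xs s \<le> N \<Longrightarrow>
    foldl delta (Cnt f u) xs = Cnt f (\<lambda>s. u s + count_list xs s)"
proof (induct xs arbitrary: u)
  case Nil then show ?case by simp
next
  case (Cons a xs)
  have aF: "a \<in> F" using Cons.prems by simp
  have "u a < N" using Cons.prems(2)[rule_format, of a] by simp
  then have d: "delta (Cnt f u) a = Cnt f (u(a := Suc (u a)))" using aF by (simp add: delta_Cnt)
  have bd: "\<forall>s. (u(a := Suc (u a))) s + count_list xs s \<le> N"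
    using Cons.prems(2) by (auto split: if_splits)
  have "foldl delta (Cnt f u) (a # xs) = foldl delta (Cnt f (u(a := Suc (u a)))) xs"
    by (simp only: foldl_Cons d)
  also have "\<dots> = Cnt f (\<lambda>s. (u(a := Suc (u a))) s + count_list xs s)"
    by (rule Cons.hyps[OF _ bd]) (use Cons.prems(1) in simp)
  also have "\<dots> = Cnt f (\<lambda>s. u s + count_list (a # xs) s)"
    by (rule arg_cong[where f="Cnt f"]) auto
  finally show ?case .
qed

lemma read_word:
  assumes "\<forall>s. y s \<le> N"
  shows "foldl delta (Cnt f (\<lambda>_. 0)) (wordof (rF y)) = Cnt f (rF y)"
proof -
  have "\<forall>s. 0 + count_list (wordof (rF y)) s \<le> N"
    using assms by (simp add: count_wordof rF_def)
  moreover have "(\<lambda>s. 0 + count_list (wordof (rF y)) s) = rF y" by (auto simp: count_wordof rF_def)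
  ultimately show ?thesis using read_list[OF set_wordof, of "\<lambda>_. 0" "rF y" f] by simp
qed

definition "tok i = wordof (rF (P!i)) @ [e]"

lemma read_tok:
  assumes "i < length P" "rF (P!i) \<noteq> (\<lambda>_. 0)"
  shows "foldl delta (Cnt False (\<lambda>_. 0)) (tok i) = Cnt False (\<lambda>_. 0)"
proof -
  have "foldl delta (Cnt False (\<lambda>_. 0)) (wordof (rF (P!i))) = Cnt False (rF (P!i))"
    using P_le[OF assms(1)] by (intro read_word) auto
  moreover have "rF (P!i) \<in> rF ` set P" using assms(1) by auto
  ultimately show ?thesis using assms e_F by (simp add: tok_def delta_Cnt)
qed

lemma count_concat_upt: "count_list (concat (map g [0..<n])) s = (\<Sum>i<n. count_list (g i) s)"
  by (induct n) auto

lemma rF_rF: "rF (rF v) = rF v" by (simp add: rF_def fun_eq_iff)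

lemma read_rep: "foldl delta q xs = q \<Longrightarrow> foldl delta q (concat (replicate k xs)) = q"
  by (induct k) auto

lemma read_concat: "(\<forall>i\<in>set is. foldl delta q (g i) = q) \<Longrightarrow> foldl delta q (concat (map g is)) = q"
  by (induct "is") auto

lemma drun_fold: "drun d q w n = foldl d q (map w [0..<n])"
  by (induct n) auto

lemma count_card: "count_list xs s = card {i. i < length xs \<and> xs ! i = s}"
proof -
  have "count_list xs s = length (filter (\<lambda>y. y = s) xs)" by (induct xs) auto
  then show ?thesis by (simp add: length_filter_conv_card)
qed

lemma complete:
  assumes "x \<in> L"
  shows "\<exists>w \<in> dlang delta q0 {Tail 0}. parikh w = mask_add x m"
proof -
  obtain c where c: "x = (\<lambda>s. b s + (\<Sum>i<length P. c i * (P ! i) s))" using assms by (auto simp: L_def)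
  define c' where "c' i = (if rF (P!i) = (\<lambda>_. 0) then 0 else c i)" for i
  define toks where "toks = concat (map (\<lambda>i. concat (replicate (c' i) (tok i))) [0..<length P])"
  define u where "u = wordof (rF b) @ [e] @ toks @ [e]"
  define w where "w i = (if i < length u then u ! i else cyc ! ((i - length u) mod len))" for i
  have rt: "foldl delta (Cnt False (\<lambda>_. 0)) toks = Cnt False (\<lambda>_. 0)"
    unfolding toks_def
  proof (rule read_concat, intro ballI)
    fix i assume "i \<in> set [0..<length P]"
    then have i: "i < length P" by simp
    show "foldl delta (Cnt False (\<lambda>_. 0)) (concat (replicate (c' i) (tok i))) = Cnt False (\<lambda>_. 0)"
    proof (cases "rF (P!i) = (\<lambda>_. 0)")
      case True then show ?thesis by (simp add: c'_def)
    next
      case False then show ?thesis by (intro read_rep read_tok i)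
    qed
  qed
  have rb: "foldl delta q0 (wordof (rF b)) = Cnt True (rF b)"
    unfolding q0_def using b_le by (intro read_word) auto
  have ru: "foldl delta q0 u = Tail 0"
    using rb rt e_F by (simp add: u_def delta_Cnt)
  have mu: "map w [0..<length u] = u" by (rule nth_equalityI) (auto simp: w_def)
  have r0: "drun delta q0 w (length u) = Tail 0" using ru mu by (simp add: drun_fold)
  have tw: "\<forall>j. w (length u + j) = cyc ! (j mod len)" by (simp add: w_def)
  have rtail: "drun delta q0 w (length u + j) = Tail (j mod len)" for j
  proof (induct j)
    case 0 then show ?case using r0 by simp
  next
    case (Suc j) then show ?case using tw by (simp add: delta_Tail mod_Suc_eq)
  qed
  have acc: "w \<in> dlang delta q0 {Tail 0}"
    unfolding dlang_def INFM_nat_le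
  proof (intro CollectI allI)
    fix M
    have "M * 1 \<le> M * len" by (rule mult_le_mono2) (use len_pos in simp)
    then have "M \<le> length u + M * len" by linarith
    moreover have "drun delta q0 w (length u + M * len) = Tail 0" using rtail[of "M * len"] by simp
    ultimately show "\<exists>n\<ge>M. drun delta q0 w n \<in> {Tail 0}" by blast
  qed
  have cu: "count_list u s = x s" if s: "s \<in> F" for s
  proof -
    have "count_list toks s = (\<Sum>i<length P. c' i * rF (P!i) s)"
      using s e_F \<open>s \<in> F\<close> by (cases "e = s"; simp add: toks_def count_concat_upt count_rep_list tok_def count_wordof rF_rF)
    also have "\<dots> = (\<Sum>i<length P. c i * (P!i) s)"
    proof (rule sum.cong)
      fix i
      show "c' i * rF (P!i) s = c i * (P!i) s"
      proof (cases "rF (P!i) = (\<lambda>_. 0)")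
        case True
        then have "(P!i) s = 0" using s by (metis rF_def)
        then show ?thesis using True by (simp add: c'_def)
      next
        case False then show ?thesis using s by (simp add: c'_def rF_def)
      qed
    qed simp
    moreover have "e \<noteq> s" using s e_F by blast
    ultimately show ?thesis using s by (simp add: u_def count_wordof c rF_def count_rep)
  qed
  have "parikh w = mask_add x m"
  proof
    fix s
    show "parikh w s = mask_add x m s"
    proof (cases "s \<in> F")
      case True
      then have eq: "{i. w i = s} = {i. i < length u \<and> w i = s}" by (rule tail_parikh(2)[OF tw])
      also have "\<dots> = {i. i < length u \<and> u ! i = s}" by (auto simp: w_def)
      finally have "card {i. w i = s} = x s" using cu[OF True] by (simp add: count_card)
      then show ?thesis using True eq by (simp add: parikh_def mask_add_def F_def)
    next
      case False
      then have "infinite {i. w i = s}" using F_I tail_parikh(1)[OF tw] by blast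
      then show ?thesis using False by (simp add: parikh_def mask_add_def F_def)
    qed
  qed
  then show ?thesis using acc by blast
qed

lemma piece_Good: "Good ((\<lambda>x. mask_add x m) ` L)"
proof -
  obtain A :: "'a nba" where A: "wf_nba A" "deterministic A" "lang A = dlang delta q0 {Tail 0}"
    using dba_to_nba[OF ok] by blast
  have "parikh ` dlang delta q0 {Tail 0} = (\<lambda>x. mask_add x m) ` L"
  proof
    show "parikh ` dlang delta q0 {Tail 0} \<subseteq> (\<lambda>x. mask_add x m) ` L" using sound by blast
    show "(\<lambda>x. mask_add x m) ` L \<subseteq> parikh ` dlang delta q0 {Tail 0}"
      using complete by (force simp: image_def)
  qed
  then show ?thesis unfolding Good_def by (intro exI[of _ A]) (use A in simp)
qed

end

lemma masks_finite: "finite {m :: 'a::finite \<Rightarrow> enat. is_mask m}"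
proof -
  have "{m :: 'a \<Rightarrow> enat. is_mask m} \<subseteq> Pi\<^sub>E UNIV (\<lambda>_. {0, \<infinity>})"
    by (auto simp: is_mask_def PiE_iff)
  then show ?thesis by (rule finite_subset) (rule finite_PiE, auto)
qed

lemma piece_Good_ext:
  fixes m :: "'a::finite \<Rightarrow> enat"
  assumes "is_mask m" "linear_set LL"
  shows "Good ((\<lambda>x. mask_add x m) ` LL)"
proof -
  obtain b P where LL: "LL = {x. \<exists>c :: nat \<Rightarrow> nat. x = (\<lambda>s. b s + (\<Sum>i<length P. c i * (P ! i) s))}"
    using assms(2) by (auto simp: linear_set_def)
  interpret piece m b P by unfold_locales (rule assms(1))
  have "LL = L" by (simp add: LL L_def)
  then show ?thesis using piece_Good by simp
qed

theorem lemma3: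
  fixes S :: "('a::finite \<Rightarrow> enat) set"
  assumes "S \<subseteq> {v. \<exists>s. v s = \<infinity>}"
    and "masked_semilinear S"
  shows "\<exists>A :: 'a nba. wf_nba A \<and> deterministic A \<and> parikh ` Jclos A = S"
proof -
  obtain Sm :: "('a \<Rightarrow> enat) \<Rightarrow> ('a \<Rightarrow> nat) set" where
    Sm: "\<forall>m. is_mask m \<longrightarrow> semilinear (Sm m)"
    and S: "S = (\<Union>m\<in>{m. is_mask m}. (\<lambda>x. mask_add x m) ` Sm m)"
    using assms(2) by (auto simp: masked_semilinear_def)
  have "\<forall>m. \<exists>FF. is_mask m \<longrightarrow> finite FF \<and> (\<forall>LL\<in>FF. linear_set LL) \<and> Sm m = \<Union>FF"
    using Sm by (auto simp: semilinear_def)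
  then obtain FF where FF: "\<And>m. is_mask m \<Longrightarrow> finite (FF m) \<and> (\<forall>LL\<in>FF m. linear_set LL) \<and> Sm m = \<Union>(FF m)"
    by metis
  define pieces where "pieces = (\<lambda>(m,LL). (\<lambda>x. mask_add x m) ` LL) ` (SIGMA m:{m. is_mask m}. FF m)"
  have fin: "finite pieces" unfolding pieces_def
    using masks_finite FF by (intro finite_imageI finite_SigmaI) auto
  have good: "\<forall>X\<in>pieces. Good X" unfolding pieces_def
    using FF piece_Good_ext by fastforce
  have "S = \<Union>pieces"
  proof
    show "S \<subseteq> \<Union>pieces"
    proof
      fix v assume "v \<in> S"
      then obtain m x where m: "is_mask m" "x \<in> Sm m" "v = mask_add x m" using S by auto
      then obtain LL where "LL \<in> FF m" "x \<in> LL" using FF[OF m(1)] by auto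
      then show "v \<in> \<Union>pieces" unfolding pieces_def using m by blast
    qed
    show "\<Union>pieces \<subseteq> S"
    proof
      fix v assume "v \<in> \<Union>pieces"
      then obtain m LL x where m: "is_mask m" "LL \<in> FF m" "x \<in> LL" "v = mask_add x m"
        unfolding pieces_def by auto
      then have "x \<in> Sm m" using FF[OF m(1)] by auto
      then show "v \<in> S" using S m by auto
    qed
  qed
  then have "Good S" using Good_Union[OF fin good] by simp
  then show ?thesis unfolding Good_def using parikh_Jclos by metis
qed

end
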